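(* Let $c\in\mathbb{R}$ and let $\mathcal{C}$ be the $\sigma$-algebra of Borel subsets of $\mathbb{R}$ that are symmetric with respect to $c$ (i.e. $B\in\mathcal{C}$ iff $B$ is Borel and $x\in B\Leftrightarrow 2c-x\in B$). Consider the statistical model $(\mathbb{R},\mathcal{C},\{N(\theta,1)\}_{\theta\in\mathbb{R}})$, where $N(\theta,1)$ is the Gaussian law with mean $\theta$ and variance $1$ restricted to $\mathcal{C}$. Let $\lambda_1\geq 0$, $\theta_1=c-\lambda_1$, $\theta_2=c+\lambda_1$, $\Theta_1=\,]-\infty,\theta_1[\,\cup\,]\theta_2,+\infty[$ and $\Theta_0=[\theta_1,\theta_2]$. Then the experts for the choice between $\Theta_1$ and $\Theta_0$ are exactly the $\mathcal{C}$-measurable decision rules with values in $\{0,1\}$ which are almost surely of the form $g_t(x)=\mathbf{1}_{[t,+\infty[}(|x-c|)$ for some $t\in\overline{\mathbb{R}^+}=[0,+\infty]$.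
   Context: Given a statistical model $(\Omega,\mathcal{A},(\mathbb{P}_\theta)_{\theta\in\Theta})$ whose laws have strictly positive densities with respect to a common measure, and a partition $\Theta=\Theta_0\cup\Theta_1$, an $\mathcal{A}$-measurable decision rule $\phi:\Omega\to\{0,1\}$ (value $d$ meaning "decide $\theta\in\Theta_d$") is an expert for the choice between $\Theta_0$ and $\Theta_1$ if for every $(\theta_0,\theta_1)\in\Theta_0\times\Theta_1$ and every non-negligible event $C\in\mathcal{A}$, $$\frac{\mathbb{P}_{\theta_1}(C\cap\{\phi=1\})}{\mathbb{P}_{\theta_1}(C)}\;\geq\;\frac{\mathbb{P}_{\theta_0}(C\cap\{\phi=1\})}{\mathbb{P}_{\theta_0}(C)}.$$ Here $\mathcal{A}=\mathcal{C}$, so only symmetric events $C$ are used; "almost surely" refers to Lebesgue-null sets. *)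

theory Defs
  imports "HOL-Probability.Probability"
begin

definition decision_rule :: "'a measure \<Rightarrow> ('a \<Rightarrow> nat) \<Rightarrow> bool" where
  "decision_rule M \<phi> \<longleftrightarrow>
     \<phi> \<in> measurable M (count_space UNIV) \<and> (\<forall>x\<in>space M. \<phi> x \<in> {0, 1})"

text \<open>Expert for the choice between Theta0 and Theta1 (value d means: decide theta in Theta_d).
  mu is the common dominating measure on M, defining negligible events.\<close>
definition expert ::
  "'a measure \<Rightarrow> 'a measure \<Rightarrow> ('t \<Rightarrow> 'a measure) \<Rightarrow> 't set \<Rightarrow> 't set \<Rightarrow> ('a \<Rightarrow> nat) \<Rightarrow> bool" where
  "expert M \<mu> P \<Theta>0 \<Theta>1 \<phi> \<longleftrightarrow> decision_rule M \<phi> \<and>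
     (\<forall>\<theta>0\<in>\<Theta>0. \<forall>\<theta>1\<in>\<Theta>1. \<forall>C\<in>sets M. emeasure \<mu> C \<noteq> 0 \<longrightarrow>
        measure (P \<theta>1) (C \<inter> {x\<in>space M. \<phi> x = 1}) / measure (P \<theta>1) C
        \<ge> measure (P \<theta>0) (C \<inter> {x\<in>space M. \<phi> x = 1}) / measure (P \<theta>0) C)"

definition sym_sets :: "real \<Rightarrow> real set set" where
  "sym_sets c = {B \<in> sets borel. \<forall>x. x \<in> B \<longleftrightarrow> 2 * c - x \<in> B}"

definition sym_space :: "real \<Rightarrow> real measure" where
  "sym_space c = sigma UNIV (sym_sets c)"

definition gauss_sym :: "real \<Rightarrow> real \<Rightarrow> real measure" where
  "gauss_sym c \<theta> = measure_of UNIV (sym_sets c) (emeasure (density lborel (normal_density \<theta> 1)))"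

definition leb_sym :: "real \<Rightarrow> real measure" where
  "leb_sym c = measure_of UNIV (sym_sets c) (emeasure lborel)"

definition g_rule :: "real \<Rightarrow> ereal \<Rightarrow> real \<Rightarrow> nat" where
  "g_rule c t x = (if t \<le> ereal \<bar>x - c\<bar> then 1 else 0)"

end

theory Submission
  imports Defs
begin

lemma sym_sets_sa: "sigma_algebra UNIV (sym_sets c)"
  unfolding sigma_algebra_iff2
proof (intro conjI allI ballI impI)
  show "sym_sets c \<subseteq> Pow UNIV" by auto
  show "{} \<in> sym_sets c" by (auto simp: sym_sets_def)
next
  fix s assume "s \<in> sym_sets c"
  then show "UNIV - s \<in> sym_sets c" by (auto simp: sym_sets_def)
next
  fix A :: "nat \<Rightarrow> real set" assume "range A \<subseteq> sym_sets c"
  then have "\<forall>i. A i \<in> sets borel \<and> (\<forall>x. x \<in> A i \<longleftrightarrow> 2 * c - x \<in> A i)"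
    by (auto simp: sym_sets_def)
  then show "(\<Union>i. A i) \<in> sym_sets c" unfolding sym_sets_def by auto
qed

lemma sets_sym_space[simp]: "sets (sym_space c) = sym_sets c"
  unfolding sym_space_def
  by (simp add: sigma_algebra.sigma_sets_eq[OF sym_sets_sa])

lemma space_sym_space[simp]: "space (sym_space c) = UNIV"
  unfolding sym_space_def by simp

lemma sym_sets_borel: "S \<in> sym_sets c \<Longrightarrow> S \<in> sets borel"
  by (simp add: sym_sets_def)

lemma sym_sets_refl: "S \<in> sym_sets c \<Longrightarrow> (2 * c - x \<in> S) = (x \<in> S)"
  by (simp add: sym_sets_def)

lemma ca_restrict:
  assumes "Ms \<subseteq> sets N"
  shows "countably_additive Ms (emeasure N)"
  unfolding countably_additive_def
proof (intro allI impI)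
  fix A :: "nat \<Rightarrow> _" assume "range A \<subseteq> Ms" "disjoint_family A"
  then show "(\<Sum>i. emeasure N (A i)) = emeasure N (\<Union> (range A))"
    using assms by (intro suminf_emeasure) auto
qed

lemma emeasure_measure_of_restr:
  assumes "sigma_algebra (space N) Ms" "Ms \<subseteq> sets N" "S \<in> Ms"
  shows "emeasure (measure_of (space N) Ms (emeasure N)) S = emeasure N S"
  by (rule emeasure_measure_of_sigma[OF assms(1) _ ca_restrict[OF assms(2)] assms(3)])
     (simp add: positive_def)

lemma gauss_emeasure:
  assumes "S \<in> sym_sets c"
  shows "emeasure (gauss_sym c \<theta>) S = emeasure (density lborel (normal_density \<theta> 1)) S"
  unfolding gauss_sym_def
  using emeasure_measure_of_restr[of "density lborel (normal_density \<theta> 1)" "sym_sets c" S]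
  using sym_sets_sa[of c] assms by (auto simp: sym_sets_def)

lemma leb_emeasure:
  assumes "S \<in> sym_sets c"
  shows "emeasure (leb_sym c) S = emeasure lborel S"
  unfolding leb_sym_def
  using emeasure_measure_of_restr[of "lborel" "sym_sets c" S]
  using sym_sets_sa[of c] assms by (auto simp: sym_sets_def)

lemma gauss_measure:
  assumes "S \<in> sym_sets c"
  shows "measure (gauss_sym c \<theta>) S = (\<integral>x. indicator S x * normal_density \<theta> 1 x \<partial>lborel)"
proof -
  have "measure (gauss_sym c \<theta>) S = measure (density lborel (normal_density \<theta> 1)) S"
    using gauss_emeasure[OF assms] by (simp add: measure_def)
  also have "\<dots> = integral\<^sup>L (density lborel (normal_density \<theta> 1)) (indicator S)"
    by simp
  also have "\<dots> = (\<integral>x. normal_density \<theta> 1 x *\<^sub>R indicator S x \<partial>lborel)"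
    using sym_sets_borel[OF assms] by (intro integral_density) auto
  finally show ?thesis by (simp add: mult.commute)
qed

definition W :: "real \<Rightarrow> real \<Rightarrow> real \<Rightarrow> real" where
  "W c \<theta> x = exp (-((\<theta>-c)^2)/2) * cosh ((\<theta>-c)*(x-c))"

definition hh :: "real \<Rightarrow> real \<Rightarrow> real \<Rightarrow> real" where
  "hh c \<theta> x = normal_density c 1 x * W c \<theta> x"

lemma nd_shift: "normal_density \<theta> 1 x = normal_density c 1 x * exp (-((\<theta>-c)^2)/2) * exp ((\<theta>-c)*(x-c))"
proof -
  have a1: "-((x-\<theta>)^2)/(2*1^2) = -((x-c)^2)/(2*1^2) + -((\<theta>-c)^2)/2 + (\<theta>-c)*(x-c)"
    by (simp add: power2_eq_square divide_simps) algebra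
  show ?thesis unfolding normal_density_def a1 exp_add by simp
qed

lemma nd_refl: "normal_density \<theta> 1 (2*c - x) = normal_density (2*c-\<theta>) 1 x"
  unfolding normal_density_def by (simp add: power2_eq_square algebra_simps)

lemma symdens: "(normal_density \<theta> 1 x + normal_density \<theta> 1 (2*c - x))/2 = hh c \<theta> x"
proof -
  have "normal_density \<theta> 1 (2*c - x) = normal_density c 1 (2*c-x) * exp (-((\<theta>-c)^2)/2) * exp ((\<theta>-c)*((2*c-x)-c))"
    by (rule nd_shift)
  also have "normal_density c 1 (2*c-x) = normal_density c 1 x" using nd_refl[of c c x] by simp
  also have "(\<theta>-c)*((2*c-x)-c) = -((\<theta>-c)*(x-c))" by algebra
  finally have e2: "normal_density \<theta> 1 (2*c - x) = normal_density c 1 x * exp (-((\<theta>-c)^2)/2) * exp (-((\<theta>-c)*(x-c)))" .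
  show ?thesis
    unfolding hh_def W_def cosh_def e2 nd_shift[of \<theta> x c]
    by (simp add: algebra_simps add_divide_distrib)
qed


lemma hh_eq: "hh c \<theta> x = (normal_density \<theta> 1 x + normal_density (2*c-\<theta>) 1 x)/2"
  using symdens[of \<theta> x c] nd_refl by simp

lemma hh_pos: "hh c \<theta> x > 0"
  unfolding hh_eq by (intro divide_pos_pos add_pos_pos normal_density_pos) auto

lemma hh_int: "integrable lborel (hh c \<theta>)"
  unfolding hh_eq[abs_def] by (intro integrable_divide integrable_add) auto

lemma hh_meas[measurable]: "hh c \<theta> \<in> borel_measurable borel"
  unfolding hh_eq[abs_def] by measurable

lemma hh_int_ind: "S \<in> sets borel \<Longrightarrow> integrable lborel (\<lambda>x. indicator S x * hh c \<theta> x)"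
  using integrable_mult_indicator[of S lborel "hh c \<theta>"] hh_int by simp

lemma gauss_measure_hh:
  assumes S: "S \<in> sym_sets c"
  shows "measure (gauss_sym c \<theta>) S = (\<integral>x. indicator S x * hh c \<theta> x \<partial>lborel)"
proof -
  have Sb: "S \<in> sets borel" using sym_sets_borel[OF S] .
  have i1: "integrable lborel (\<lambda>x. indicator S x * normal_density \<theta> 1 x)"
    using integrable_mult_indicator[of S lborel "normal_density \<theta> 1"] Sb by simp
  have i2: "integrable lborel (\<lambda>x. indicator S x * normal_density (2*c-\<theta>) 1 x)"
    using integrable_mult_indicator[of S lborel "normal_density (2*c-\<theta>) 1"] Sb by simp
  have "(\<integral>x. indicator S x * normal_density \<theta> 1 x \<partial>lborel)
      = \<bar>-1\<bar> *\<^sub>R (\<integral>x. indicator S (2*c + -1*x) * normal_density \<theta> 1 (2*c + -1*x) \<partial>lborel)"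
    by (rule lborel_integral_real_affine) simp
  also have "\<dots> = (\<integral>x. indicator S x * normal_density (2*c-\<theta>) 1 x \<partial>lborel)"
    using sym_sets_refl[OF S] nd_refl by (simp add: indicator_def)
  finally have r: "(\<integral>x. indicator S x * normal_density \<theta> 1 x \<partial>lborel)
      = (\<integral>x. indicator S x * normal_density (2*c-\<theta>) 1 x \<partial>lborel)" .
  have "(\<integral>x. indicator S x * hh c \<theta> x \<partial>lborel) =
     (\<integral>x. (indicator S x * normal_density \<theta> 1 x + indicator S x * normal_density (2*c-\<theta>) 1 x)/2 \<partial>lborel)"
    by (simp add: hh_eq algebra_simps add_divide_distrib)
  also have "\<dots> = ((\<integral>x. indicator S x * normal_density \<theta> 1 x \<partial>lborel) +
       (\<integral>x. indicator S x * normal_density (2*c-\<theta>) 1 x \<partial>lborel))/2"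
    using i1 i2 by simp
  finally show ?thesis using r gauss_measure[OF S] by simp
qed

lemma cosh_abs_mono: "\<bar>x\<bar> \<le> \<bar>y\<bar> \<Longrightarrow> cosh (x::real) \<le> cosh y"
  using cosh_real_nonneg_le_iff[of "\<bar>x\<bar>" "\<bar>y\<bar>"] by simp

lemma cosh_abs_strict: "\<bar>x\<bar> < \<bar>y\<bar> \<Longrightarrow> cosh (x::real) < cosh y"
  using cosh_real_nonneg_less_iff[of "\<bar>x\<bar>" "\<bar>y\<bar>"] by simp

lemma two_cosh_prod: "2 * (cosh x * cosh y) = cosh (x + y) + cosh (x - (y::real))"
  by (simp add: cosh_add cosh_diff)

lemma cosh_prod:
  fixes a b u v :: real
  assumes "\<bar>b\<bar> \<le> \<bar>a\<bar>" "\<bar>u\<bar> \<le> \<bar>v\<bar>"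
  shows "cosh (a*u) * cosh (b* v) \<le> cosh (a* v) * cosh (b*u)"
proof -
  define A B U V where "A = \<bar>a\<bar>" "B = \<bar>b\<bar>" "U = \<bar>u\<bar>" "V = \<bar>v\<bar>"
  have nn: "A \<ge> 0" "B \<ge> 0" "U \<ge> 0" "V \<ge> 0" "B \<le> A" "U \<le> V" using assms by (auto simp: A_B_U_V_def)
  have c: "\<And>x y::real. cosh (x*y) = cosh (\<bar>x\<bar>*\<bar>y\<bar>)"
    by (simp only: abs_mult[symmetric] cosh_real_abs)
  have 1: "A*U + B* V \<le> A* V + B*U"
  proof -
    have "0 \<le> (A-B)*(V-U)" using nn by simp
    then show ?thesis by (simp add: algebra_simps)
  qed
  have 2: "\<bar>A*U - B* V\<bar> \<le> \<bar>A* V - B*U\<bar>"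
  proof -
    have "B*B \<le> A*A" using nn by (intro mult_mono) auto
    moreover have "U*U \<le> V* V" using nn by (intro mult_mono) auto
    ultimately have "0 \<le> (A*A-B*B)*(V* V-U*U)" by simp
    then have "(A*U - B* V)^2 \<le> (A* V - B*U)^2" by (simp add: power2_eq_square algebra_simps)
    then show ?thesis using abs_le_square_iff by blast
  qed
  have "2 * (cosh (A*U) * cosh (B* V)) \<le> 2 * (cosh (A* V) * cosh (B*U))"
    unfolding two_cosh_prod
    using cosh_abs_mono[of "A*U + B* V" "A* V + B*U"] cosh_abs_mono[OF 2] 1 nn
    by (intro add_mono) (auto simp: abs_of_nonneg)
  then have "cosh (A*U) * cosh (B* V) \<le> cosh (A* V) * cosh (B*U)" by simp
  then show ?thesis unfolding c[of a u] c[of b v] c[of a v] c[of b u] A_B_U_V_def .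
qed

lemma W_ratio:
  assumes "\<bar>\<theta>0 - c\<bar> \<le> \<bar>\<theta>1 - c\<bar>" "\<bar>y - c\<bar> \<le> \<bar>x - c\<bar>"
  shows "W c \<theta>1 y * W c \<theta>0 x \<le> W c \<theta>1 x * W c \<theta>0 y"
proof -
  have "cosh ((\<theta>1-c)*(y-c)) * cosh ((\<theta>0-c)*(x-c)) \<le> cosh ((\<theta>1-c)*(x-c)) * cosh ((\<theta>0-c)*(y-c))"
    by (rule cosh_prod[OF assms])
  then have "(exp (-((\<theta>1-c)^2)/2) * exp (-((\<theta>0-c)^2)/2)) * (cosh ((\<theta>1-c)*(y-c)) * cosh ((\<theta>0-c)*(x-c)))
     \<le> (exp (-((\<theta>1-c)^2)/2) * exp (-((\<theta>0-c)^2)/2)) * (cosh ((\<theta>1-c)*(x-c)) * cosh ((\<theta>0-c)*(y-c)))"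
    by (intro mult_left_mono) auto
  then show ?thesis unfolding W_def by (simp add: ac_simps)
qed

lemma W_pos: "W c \<theta> x > 0"
  unfolding W_def by (simp add: cosh_real_ge_1 add_pos_pos order_less_le_trans[OF zero_less_one])

lemma W_c: "W c c x = 1" unfolding W_def by simp

lemma W_strict:
  assumes "\<theta> \<noteq> c" "\<bar>y - c\<bar> < \<bar>x - c\<bar>"
  shows "W c \<theta> y < W c \<theta> x"
proof -
  have "\<bar>(\<theta>-c)*(y-c)\<bar> < \<bar>(\<theta>-c)*(x-c)\<bar>" using assms by (simp add: abs_mult)
  then show ?thesis unfolding W_def using cosh_abs_strict by simp
qed

definition q :: "real \<Rightarrow> real \<Rightarrow> real set \<Rightarrow> real" where
  "q c \<theta> S = (\<integral>x. indicator S x * hh c \<theta> x \<partial>lborel)"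

lemma gauss_q: "S \<in> sym_sets c \<Longrightarrow> measure (gauss_sym c \<theta>) S = q c \<theta> S"
  unfolding q_def by (rule gauss_measure_hh)

lemma q_nonneg: "q c \<theta> S \<ge> 0"
  unfolding q_def by (intro integral_nonneg_AE AE_I2) (simp add: hh_pos less_imp_le)

lemma q_union:
  assumes "A \<in> sets borel" "B \<in> sets borel" "A \<inter> B = {}"
  shows "q c \<theta> (A \<union> B) = q c \<theta> A + q c \<theta> B"
proof -
  have "\<And>x. indicator (A \<union> B) x * hh c \<theta> x = indicator A x * hh c \<theta> x + indicator B x * hh c \<theta> x"
    using assms(3) by (auto simp: indicator_def)
  then show ?thesis unfolding q_def
    using Bochner_Integration.integral_add[OF hh_int_ind[OF assms(1)] hh_int_ind[OF assms(2)]]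
    by simp
qed

lemma int_pos:
  fixes g :: "real \<Rightarrow> real"
  assumes S: "S \<in> sets borel" and ne: "emeasure lborel S \<noteq> 0" and pos: "\<And>x. x \<in> S \<Longrightarrow> g x > 0"
    and int: "integrable lborel (\<lambda>x. indicator S x * g x)"
  shows "(\<integral>x. indicator S x * g x \<partial>lborel) > 0"
proof -
  have nn: "AE x in lborel. 0 \<le> indicator S x * g x"
    using pos by (intro AE_I2) (auto simp: indicator_def less_imp_le)
  have "(\<integral>x. indicator S x * g x \<partial>lborel) \<noteq> 0"
  proof
    assume "(\<integral>x. indicator S x * g x \<partial>lborel) = 0"
    then have "AE x in lborel. indicator S x * g x = 0"
      using integral_nonneg_eq_0_iff_AE[OF int nn] by simp
    then have "AE x in lborel. x \<notin> S"
      by eventually_elim (use pos in \<open>fastforce simp: indicator_def\<close>)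
    then have "emeasure lborel S = 0"
      using AE_iff_measurable[of S lborel "\<lambda>x. x \<notin> S"] S by auto
    then show False using ne by simp
  qed
  moreover have "(\<integral>x. indicator S x * g x \<partial>lborel) \<ge> 0"
    using nn by (rule integral_nonneg_AE)
  ultimately show ?thesis by simp
qed

lemma q_pos:
  assumes "S \<in> sets borel" "emeasure lborel S \<noteq> 0"
  shows "q c \<theta> S > 0"
  unfolding q_def using assms hh_pos hh_int_ind by (intro int_pos) auto

lemma q_bound:
  assumes S: "S \<in> sets borel" and le: "AE x in lborel. x \<in> S \<longrightarrow> hh c \<theta>1 x * K0 \<le> K1 * hh c \<theta>0 x"
  shows "q c \<theta>1 S * K0 \<le> K1 * q c \<theta>0 S"
proof -
  have "q c \<theta>1 S * K0 = (\<integral>x. indicator S x * hh c \<theta>1 x * K0 \<partial>lborel)"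
    unfolding q_def by simp
  also have "\<dots> \<le> (\<integral>x. K1 * (indicator S x * hh c \<theta>0 x) \<partial>lborel)"
    using le hh_int_ind[OF S]
    by (intro integral_mono_AE) (auto elim!: eventually_mono simp: indicator_def)
  also have "\<dots> = K1 * q c \<theta>0 S" unfolding q_def by simp
  finally show ?thesis .
qed

lemma q_strict:
  assumes S: "S \<in> sets borel" "emeasure lborel S \<noteq> 0"
    and lt: "\<And>x. x \<in> S \<Longrightarrow> K1 * hh c \<theta>0 x < hh c \<theta>1 x * K0"
  shows "K1 * q c \<theta>0 S < q c \<theta>1 S * K0"
proof -
  have i: "integrable lborel (\<lambda>x. indicator S x * (hh c \<theta>1 x * K0 - K1 * hh c \<theta>0 x))"
  proof -
    have "integrable lborel (\<lambda>x. (indicator S x * hh c \<theta>1 x) * K0 - K1 * (indicator S x * hh c \<theta>0 x))"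
      using hh_int_ind[OF S(1)] by auto
    then show ?thesis by (simp add: algebra_simps)
  qed
  have "0 < (\<integral>x. indicator S x * (hh c \<theta>1 x * K0 - K1 * hh c \<theta>0 x) \<partial>lborel)"
    using S lt i by (intro int_pos) auto
  also have "\<dots> = (\<integral>x. (indicator S x * hh c \<theta>1 x) * K0 - K1 * (indicator S x * hh c \<theta>0 x) \<partial>lborel)"
    by (simp add: algebra_simps)
  also have "\<dots> = q c \<theta>1 S * K0 - K1 * q c \<theta>0 S"
    using hh_int_ind[OF S(1)] unfolding q_def
    by (subst Bochner_Integration.integral_diff) auto
  finally show ?thesis by simp
qed

lemma dr_E:
  assumes "decision_rule (sym_space c) \<phi>"
  shows "{x. \<phi> x = 1} \<in> sym_sets c"
proof -
  have "\<phi> -` {1} \<inter> space (sym_space c) \<in> sets (sym_space c)"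
    using assms unfolding decision_rule_def by (intro measurable_sets) auto
  moreover have "\<phi> -` {1} \<inter> space (sym_space c) = {x. \<phi> x = 1}" by auto
  ultimately show ?thesis by simp
qed

lemma dr_01:
  assumes "decision_rule (sym_space c) \<phi>"
  shows "\<phi> x = 0 \<or> \<phi> x = 1"
  using assms unfolding decision_rule_def by auto

lemma sym_Int: "A \<in> sym_sets c \<Longrightarrow> B \<in> sym_sets c \<Longrightarrow> A \<inter> B \<in> sym_sets c"
  unfolding sym_sets_def by auto

lemma sym_Diff: "A \<in> sym_sets c \<Longrightarrow> B \<in> sym_sets c \<Longrightarrow> A - B \<in> sym_sets c"
  unfolding sym_sets_def by auto

lemma sym_Un: "A \<in> sym_sets c \<Longrightarrow> B \<in> sym_sets c \<Longrightarrow> A \<union> B \<in> sym_sets c"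
  unfolding sym_sets_def by auto

lemma ratio_ineq:
  fixes a0 b0 a1 b1 :: real
  assumes "a0 * b1 \<le> a1 * b0" "a0 + b0 > 0" "a1 + b1 > 0"
  shows "a0 / (a0 + b0) \<le> a1 / (a1 + b1)"
proof -
  have "a0 * (a1 + b1) \<le> a1 * (a0 + b0)" using assms(1) by (simp add: algebra_simps)
  then show ?thesis using assms(2,3) by (simp add: divide_le_eq le_divide_eq mult.commute frac_le_eq)
qed

lemma ratio_ineq_rev:
  fixes a0 b0 a1 b1 :: real
  assumes "a0 / (a0 + b0) \<le> a1 / (a1 + b1)" "a0 + b0 > 0" "a1 + b1 > 0"
  shows "a0 * b1 \<le> a1 * b0"
proof -
  have "a0 * (a1 + b1) \<le> a1 * (a0 + b0)" using assms by (simp add: field_simps)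
  then show ?thesis by (simp add: algebra_simps)
qed

lemma dir2:
  assumes dr: "decision_rule (sym_space c) \<phi>" and t: "0 \<le> t"
    and ae: "AE x in lborel. \<phi> x = g_rule c t x"
    and th: "\<bar>\<theta>0 - c\<bar> \<le> \<bar>\<theta>1 - c\<bar>"
    and C: "C \<in> sym_sets c" and Cne: "emeasure lborel C \<noteq> 0"
  shows "measure (gauss_sym c \<theta>0) (C \<inter> {x. \<phi> x = 1}) / measure (gauss_sym c \<theta>0) C
       \<le> measure (gauss_sym c \<theta>1) (C \<inter> {x. \<phi> x = 1}) / measure (gauss_sym c \<theta>1) C"
proof -
  define E where "E = {x. \<phi> x = 1}"
  have E: "E \<in> sym_sets c" using dr_E[OF dr] by (simp add: E_def)
  define A where "A = C \<inter> E"
  define B where "B = C - E"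
  have A: "A \<in> sym_sets c" and B: "B \<in> sym_sets c"
    using C E by (auto simp: A_def B_def intro: sym_Int sym_Diff)
  have Ab: "A \<in> sets borel" and Bb: "B \<in> sets borel" using A B by (auto simp: sym_sets_borel)
  have CAB: "C = A \<union> B" "A \<inter> B = {}" by (auto simp: A_def B_def)
  have QC: "q c \<theta> C = q c \<theta> A + q c \<theta> B" for \<theta>
    using q_union[OF Ab Bb CAB(2)] CAB(1) by simp
  have Cpos: "q c \<theta> C > 0" for \<theta> using q_pos[OF sym_sets_borel[OF C] Cne] .
  have key: "q c \<theta>0 A * q c \<theta>1 B \<le> q c \<theta>1 A * q c \<theta>0 B"
  proof (cases t)
    case PInf
    have "AE x in lborel. \<phi> x = 0" using ae by eventually_elim (simp add: g_rule_def PInf)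
    then have "AE x in lborel. indicator A x * hh c \<theta> x = 0" for \<theta>
      by eventually_elim (auto simp: A_def E_def indicator_def)
    then have "q c \<theta> A = 0" for \<theta> unfolding q_def by (rule integral_eq_zero_AE)
    then show ?thesis by simp
  next
    case MInf then show ?thesis using t by simp
  next
    case (real r)
    define K0 where "K0 = W c \<theta>0 (c + r)"
    define K1 where "K1 = W c \<theta>1 (c + r)"
    have r0: "r \<ge> 0" using t real by simp
    have K0: "K0 > 0" unfolding K0_def by (rule W_pos)
    have hA: "AE x in lborel. x \<in> A \<longrightarrow> hh c \<theta>0 x * K1 \<le> K0 * hh c \<theta>1 x"
      using ae
    proof eventually_elim
      case (elim x)
      show ?case
      proof
        assume "x \<in> A"
        then have "\<phi> x = 1" by (simp add: A_def E_def)
        then have "g_rule c t x = 1" using elim by simp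
        then have "r \<le> \<bar>x - c\<bar>" unfolding g_rule_def real by (auto split: if_splits)
        then have "\<bar>(c + r) - c\<bar> \<le> \<bar>x - c\<bar>" using r0 by simp
        from W_ratio[OF th this]
        have "K1 * W c \<theta>0 x \<le> W c \<theta>1 x * K0" by (simp add: K0_def K1_def)
        then have "normal_density c 1 x * (K1 * W c \<theta>0 x) \<le> normal_density c 1 x * (W c \<theta>1 x * K0)"
          by (intro mult_left_mono) auto
        then show "hh c \<theta>0 x * K1 \<le> K0 * hh c \<theta>1 x" unfolding hh_def by (simp only: ac_simps)
      qed
    qed
    have hB: "AE x in lborel. x \<in> B \<longrightarrow> hh c \<theta>1 x * K0 \<le> K1 * hh c \<theta>0 x"
      using ae
    proof eventually_elim
      case (elim x)
      show ?case
      proof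
        assume "x \<in> B"
        then have "\<phi> x \<noteq> 1" by (simp add: B_def E_def)
        then have "g_rule c t x \<noteq> 1" using elim by simp
        then have "\<not> r \<le> \<bar>x - c\<bar>" unfolding g_rule_def real by (auto split: if_splits)
        then have "\<bar>x - c\<bar> \<le> \<bar>(c + r) - c\<bar>" using r0 by simp
        from W_ratio[OF th this]
        have "W c \<theta>1 x * K0 \<le> K1 * W c \<theta>0 x" by (simp add: K0_def K1_def)
        then have "normal_density c 1 x * (W c \<theta>1 x * K0) \<le> normal_density c 1 x * (K1 * W c \<theta>0 x)"
          by (intro mult_left_mono) auto
        then show "hh c \<theta>1 x * K0 \<le> K1 * hh c \<theta>0 x" unfolding hh_def by (simp only: ac_simps)
      qed
    qed
    have iA: "q c \<theta>0 A * K1 \<le> K0 * q c \<theta>1 A" using q_bound[OF Ab hA] .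
    have iB: "q c \<theta>1 B * K0 \<le> K1 * q c \<theta>0 B" using q_bound[OF Bb hB] .
    have "K0 * (q c \<theta>0 A * q c \<theta>1 B) = q c \<theta>0 A * (q c \<theta>1 B * K0)" by (simp add: ac_simps)
    also have "\<dots> \<le> q c \<theta>0 A * (K1 * q c \<theta>0 B)"
      using iB q_nonneg by (intro mult_left_mono) auto
    also have "\<dots> = (q c \<theta>0 A * K1) * q c \<theta>0 B" by (simp add: ac_simps)
    also have "\<dots> \<le> (K0 * q c \<theta>1 A) * q c \<theta>0 B"
      using iA q_nonneg by (intro mult_right_mono) auto
    also have "\<dots> = K0 * (q c \<theta>1 A * q c \<theta>0 B)" by (simp add: ac_simps)
    finally show ?thesis using K0 by simp
  qed
  have "q c \<theta>0 A / (q c \<theta>0 A + q c \<theta>0 B) \<le> q c \<theta>1 A / (q c \<theta>1 A + q c \<theta>1 B)"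
    using key Cpos[of \<theta>0] Cpos[of \<theta>1] unfolding QC by (intro ratio_ineq) auto
  then show ?thesis
    using gauss_q[OF C] gauss_q[OF A] QC by (simp add: A_def E_def)
qed

lemma inv_suc_less: "0 < (d::real) \<Longrightarrow> \<exists>n. inverse (real (Suc n)) < d"
proof -
  assume "0 < d"
  then obtain n where "0 < n" "inverse (real n) < d" using ex_inverse_of_nat_less by blast
  then have "inverse (real (Suc (n - 1))) < d" by simp
  then show ?thesis by blast
qed

lemma V_sym: "{x. \<bar>x - c\<bar> < s} \<in> sym_sets c"
proof -
  have "{x. \<bar>x - c\<bar> < s} \<in> sets borel" by measurable
  moreover have "\<forall>x. (x \<in> {x. \<bar>x - c\<bar> < s}) = (2*c - x \<in> {x. \<bar>x - c\<bar> < s})" by auto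
  ultimately show ?thesis by (simp add: sym_sets_def)
qed

lemma U_sym: "{x. s < \<bar>x - c\<bar>} \<in> sym_sets c"
proof -
  have "{x. s < \<bar>x - c\<bar>} \<in> sets borel" by measurable
  moreover have "\<forall>x. (x \<in> {x. s < \<bar>x - c\<bar>}) = (2*c - x \<in> {x. s < \<bar>x - c\<bar>})" by auto
  ultimately show ?thesis by (simp add: sym_sets_def)
qed

lemma A_sym:
  assumes "decision_rule (sym_space c) \<phi>"
  shows "{x. \<bar>x - c\<bar> < s \<and> \<phi> x = 1} \<in> sym_sets c"
proof -
  have "{x. \<bar>x - c\<bar> < s \<and> \<phi> x = 1} = {x. \<bar>x - c\<bar> < s} \<inter> {x. \<phi> x = 1}" by auto
  then show ?thesis using sym_Int[OF V_sym dr_E[OF assms]] by simp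
qed

lemma B_sym:
  assumes "decision_rule (sym_space c) \<phi>"
  shows "{x. s < \<bar>x - c\<bar> \<and> \<phi> x = 0} \<in> sym_sets c"
proof -
  have "{x. s < \<bar>x - c\<bar> \<and> \<phi> x = 0} = {x. s < \<bar>x - c\<bar>} - {x. \<phi> x = 1}"
    using dr_01[OF assms] by force
  then show ?thesis using sym_Diff[OF U_sym dr_E[OF assms]] by simp
qed

lemma key1:
  assumes dr: "decision_rule (sym_space c) \<phi>" and th: "\<theta>1 \<noteq> c"
    and ex: "\<And>C. C \<in> sym_sets c \<Longrightarrow> emeasure lborel C \<noteq> 0 \<Longrightarrow>
      measure (gauss_sym c c) (C \<inter> {x. \<phi> x = 1}) / measure (gauss_sym c c) C
      \<le> measure (gauss_sym c \<theta>1) (C \<inter> {x. \<phi> x = 1}) / measure (gauss_sym c \<theta>1) C"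
  shows "emeasure lborel {x. \<bar>x - c\<bar> < s \<and> \<phi> x = 1} = 0 \<or> emeasure lborel {x. s < \<bar>x - c\<bar> \<and> \<phi> x = 0} = 0"
proof (rule ccontr)
  define A where "A = {x. \<bar>x - c\<bar> < s \<and> \<phi> x = 1}"
  define B where "B = {x. s < \<bar>x - c\<bar> \<and> \<phi> x = 0}"
  assume "\<not> ?thesis"
  then have An: "emeasure lborel A \<noteq> 0" and Bn: "emeasure lborel B \<noteq> 0" by (auto simp: A_def B_def)
  have A: "A \<in> sym_sets c" unfolding A_def by (rule A_sym[OF dr])
  have B: "B \<in> sym_sets c" unfolding B_def by (rule B_sym[OF dr])
  have Ab: "A \<in> sets borel" and Bb: "B \<in> sets borel" using A B by (auto simp: sym_sets_borel)
  define C where "C = A \<union> B"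
  have C: "C \<in> sym_sets c" unfolding C_def using A B by (rule sym_Un)
  have AB: "A \<inter> B = {}" by (auto simp: A_def B_def)
  have CE: "C \<inter> {x. \<phi> x = 1} = A" by (auto simp: C_def A_def B_def)
  have "A \<noteq> {}" using An by auto
  then have s0: "s \<ge> 0" by (auto simp: A_def)
  have "emeasure lborel A \<le> emeasure lborel C"
    using C sym_sets_borel[OF C] by (intro emeasure_mono) (auto simp: C_def)
  then have Cn: "emeasure lborel C \<noteq> 0" using An by (auto simp: zero_less_iff_neq_zero[symmetric])
  have QC: "q c \<theta> C = q c \<theta> A + q c \<theta> B" for \<theta>
    using q_union[OF Ab Bb AB] by (simp add: C_def)
  have Cpos: "q c \<theta> C > 0" for \<theta> using q_pos[OF sym_sets_borel[OF C] Cn] .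
  have "q c c A / (q c c A + q c c B) \<le> q c \<theta>1 A / (q c \<theta>1 A + q c \<theta>1 B)"
    using ex[OF C Cn] unfolding CE gauss_q[OF C] gauss_q[OF A] QC .
  then have main: "q c c A * q c \<theta>1 B \<le> q c \<theta>1 A * q c c B"
    using Cpos[of c] Cpos[of \<theta>1] unfolding QC by (rule ratio_ineq_rev)
  define K where "K = W c \<theta>1 (c + s)"
  have hA: "AE x in lborel. x \<in> A \<longrightarrow> hh c \<theta>1 x * 1 \<le> K * hh c c x"
  proof (intro AE_I2 impI)
    fix x assume "x \<in> A"
    then have "\<bar>x - c\<bar> < \<bar>(c + s) - c\<bar>" using s0 by (simp add: A_def)
    then have "W c \<theta>1 x < K" unfolding K_def by (rule W_strict[OF th])
    then have "normal_density c 1 x * W c \<theta>1 x \<le> normal_density c 1 x * K"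
      by (intro mult_left_mono) auto
    then show "hh c \<theta>1 x * 1 \<le> K * hh c c x" by (simp add: hh_def W_c mult.commute)
  qed
  have hB: "K * hh c c x < hh c \<theta>1 x * 1" if "x \<in> B" for x
  proof -
    have "\<bar>(c + s) - c\<bar> < \<bar>x - c\<bar>" using s0 that by (simp add: B_def)
    then have "K < W c \<theta>1 x" unfolding K_def by (rule W_strict[OF th])
    then have "normal_density c 1 x * K < normal_density c 1 x * W c \<theta>1 x"
      by (intro mult_strict_left_mono) (auto intro: normal_density_pos)
    then show ?thesis by (simp add: hh_def W_c mult.commute)
  qed
  have iA: "q c \<theta>1 A * 1 \<le> K * q c c A" using q_bound[OF Ab hA] .
  have iB: "K * q c c B < q c \<theta>1 B * 1" using q_strict[OF Bb Bn hB] .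
  have A0: "q c c A > 0" using q_pos[OF Ab An] .
  have "q c \<theta>1 A * q c c B \<le> (K * q c c A) * q c c B"
    using iA q_nonneg by (intro mult_right_mono) auto
  also have "\<dots> = q c c A * (K * q c c B)" by (simp add: ac_simps)
  also have "\<dots> < q c c A * q c \<theta>1 B"
    using iB A0 by (intro mult_strict_left_mono) auto
  finally show False using main by simp
qed

lemma ae_null_sym: "S \<in> sym_sets c \<Longrightarrow> emeasure lborel S = 0 \<Longrightarrow> AE x in lborel. x \<notin> S"
  by (intro AE_not_in null_setsI) (auto simp: sym_sets_borel)

lemma dir1:
  assumes dr: "decision_rule (sym_space c) \<phi>"
    and key: "\<And>s. emeasure lborel {x. \<bar>x - c\<bar> < s \<and> \<phi> x = 1} = 0 \<or> emeasure lborel {x. s < \<bar>x - c\<bar> \<and> \<phi> x = 0} = 0"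
  shows "\<exists>t::ereal. 0 \<le> t \<and> (AE x in lborel. \<phi> x = g_rule c t x)"
proof -
  define T where "T = {s. 0 \<le> s \<and> emeasure lborel {x. \<bar>x - c\<bar> < s \<and> \<phi> x = 1} = 0}"
  have T0: "0 \<in> T" by (simp add: T_def)
  have down: "emeasure lborel {x. \<bar>x - c\<bar> < s' \<and> \<phi> x = 1} = 0" if "s \<in> T" "s' \<le> s" for s s'
  proof -
    have "emeasure lborel {x. \<bar>x - c\<bar> < s' \<and> \<phi> x = 1} \<le> emeasure lborel {x. \<bar>x - c\<bar> < s \<and> \<phi> x = 1}"
      using that(2) A_sym[OF dr, of s] by (intro emeasure_mono) (auto simp: sym_sets_borel)
    then show ?thesis using that(1) by (simp add: T_def)
  qed
  show ?thesis
  proof (cases "bdd_above T")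
    case False
    have hN: "emeasure lborel {x. \<bar>x - c\<bar> < real n \<and> \<phi> x = 1} = 0" for n
    proof -
      obtain s where "s \<in> T" "real n < s" using False unfolding bdd_above_def
        by (meson not_le)
      then show ?thesis using down by auto
    qed
    then have "AE x in lborel. \<forall>n. x \<notin> {x. \<bar>x - c\<bar> < real n \<and> \<phi> x = 1}"
      by (intro AE_all_countable[THEN iffD2] allI ae_null_sym[OF A_sym[OF dr]] hN)
    then have "AE x in lborel. \<phi> x = g_rule c \<infinity> x"
    proof eventually_elim
      case (elim x)
      obtain n where "\<bar>x - c\<bar> < real n" using reals_Archimedean2 by blast
      then have "\<phi> x \<noteq> 1" using elim by auto
      then show ?case using dr_01[OF dr, of x] by (simp add: g_rule_def)
    qed
    then show ?thesis by (intro exI[of _ \<infinity>]) simp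
  next
    case True
    define t0 where "t0 = Sup T"
    have t0: "0 \<le> t0" unfolding t0_def using cSup_upper[OF T0 True] .
    have hA: "emeasure lborel {x. \<bar>x - c\<bar> < t0 - inverse (real (Suc n)) \<and> \<phi> x = 1} = 0" for n
    proof -
      have "t0 - inverse (real (Suc n)) < Sup T" unfolding t0_def by simp
      then obtain s where "s \<in> T" "t0 - inverse (real (Suc n)) < s" using less_cSupD[of T] T0 by blast
      then show ?thesis using down by auto
    qed
    have hB: "emeasure lborel {x. t0 + inverse (real (Suc n)) < \<bar>x - c\<bar> \<and> \<phi> x = 0} = 0" for n
    proof -
      define s where "s = t0 + inverse (real (Suc n))"
      have "s \<notin> T"
      proof
        assume "s \<in> T"
        then have "s \<le> t0" unfolding t0_def using cSup_upper[OF _ True] by blast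
        then show False by (simp add: s_def)
      qed
      moreover have "0 \<le> s" using t0 by (simp add: s_def)
      ultimately have "emeasure lborel {x. \<bar>x - c\<bar> < s \<and> \<phi> x = 1} \<noteq> 0" by (simp add: T_def)
      then show ?thesis using key[of s] by (simp add: s_def)
    qed
    have ae1: "AE x in lborel. \<forall>n. x \<notin> {x. \<bar>x - c\<bar> < t0 - inverse (real (Suc n)) \<and> \<phi> x = 1}"
      by (intro AE_all_countable[THEN iffD2] allI ae_null_sym[OF A_sym[OF dr]] hA)
    have ae2: "AE x in lborel. \<forall>n. x \<notin> {x. t0 + inverse (real (Suc n)) < \<bar>x - c\<bar> \<and> \<phi> x = 0}"
      by (intro AE_all_countable[THEN iffD2] allI ae_null_sym[OF B_sym[OF dr]] hB)
    have ae3: "AE x in lborel. x \<notin> {c - t0, c + t0}"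
      by (intro AE_not_in finite_imp_null_set_lborel) simp
    have "AE x in lborel. \<phi> x = g_rule c (ereal t0) x"
      using ae1 ae2 ae3
    proof eventually_elim
      case (elim x)
      consider "\<bar>x - c\<bar> < t0" | "t0 < \<bar>x - c\<bar>" | "\<bar>x - c\<bar> = t0" by linarith
      then show ?case
      proof cases
        case 1
        then obtain n where "inverse (real (Suc n)) < t0 - \<bar>x - c\<bar>" using inv_suc_less by force
        then have "\<bar>x - c\<bar> < t0 - inverse (real (Suc n))" by simp
        then show ?thesis using spec[OF elim(1), of n] 1 dr_01[OF dr, of x] by (auto simp: g_rule_def)
      next
        case 2
        then obtain n where "inverse (real (Suc n)) < \<bar>x - c\<bar> - t0" using inv_suc_less by force
        then have "t0 + inverse (real (Suc n)) < \<bar>x - c\<bar>" by simp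
        then show ?thesis using spec[OF elim(2), of n] 2 dr_01[OF dr, of x] by (auto simp: g_rule_def)
      next
        case 3
        then have "x = c - t0 \<or> x = c + t0" by (auto simp: abs_if split: if_splits)
        then show ?thesis using elim(3) by auto
      qed
    qed
    then show ?thesis using t0 by (intro exI[of _ "ereal t0"]) simp
  qed
qed

theorem corollary4p4:
  fixes c lam1 :: real and \<phi> :: "real \<Rightarrow> nat"
  assumes "lam1 \<ge> 0"
  shows "expert (sym_space c) (leb_sym c) (gauss_sym c)
           {c - lam1 .. c + lam1} ({..< c - lam1} \<union> {c + lam1 <..}) \<phi>
         \<longleftrightarrow> decision_rule (sym_space c) \<phi> \<and>
             (\<exists>t::ereal. 0 \<le> t \<and> (AE x in lborel. \<phi> x = g_rule c t x))"
proof
  assume exp: "expert (sym_space c) (leb_sym c) (gauss_sym c)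
           {c - lam1 .. c + lam1} ({..< c - lam1} \<union> {c + lam1 <..}) \<phi>"
  have dr: "decision_rule (sym_space c) \<phi>" using exp unfolding expert_def by simp
  define \<theta>1 where "\<theta>1 = c + lam1 + 1"
  have th1: "\<theta>1 \<in> {..< c - lam1} \<union> {c + lam1 <..}" by (simp add: \<theta>1_def)
  have th0: "c \<in> {c - lam1 .. c + lam1}" using assms by simp
  have ex: "measure (gauss_sym c c) (C \<inter> {x. \<phi> x = 1}) / measure (gauss_sym c c) C
      \<le> measure (gauss_sym c \<theta>1) (C \<inter> {x. \<phi> x = 1}) / measure (gauss_sym c \<theta>1) C"
    if C: "C \<in> sym_sets c" and Cn: "emeasure lborel C \<noteq> 0" for C
  proof -
    have "emeasure (leb_sym c) C \<noteq> 0" using leb_emeasure[OF C] Cn by simp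
    then show ?thesis using exp th0 th1 C unfolding expert_def by auto
  qed
  have key: "emeasure lborel {x. \<bar>x - c\<bar> < s \<and> \<phi> x = 1} = 0 \<or> emeasure lborel {x. s < \<bar>x - c\<bar> \<and> \<phi> x = 0} = 0" for s
  proof -
    have "\<theta>1 \<noteq> c" using assms by (simp add: \<theta>1_def)
    from key1[OF dr this ex] show ?thesis .
  qed
  show "decision_rule (sym_space c) \<phi> \<and> (\<exists>t::ereal. 0 \<le> t \<and> (AE x in lborel. \<phi> x = g_rule c t x))"
    using dr dir1[OF dr key] by blast
next
  assume rhs: "decision_rule (sym_space c) \<phi> \<and> (\<exists>t::ereal. 0 \<le> t \<and> (AE x in lborel. \<phi> x = g_rule c t x))"
  then have dr: "decision_rule (sym_space c) \<phi>" by simp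
  obtain t where t: "0 \<le> t" "AE x in lborel. \<phi> x = g_rule c t x" using rhs by blast
  show "expert (sym_space c) (leb_sym c) (gauss_sym c)
           {c - lam1 .. c + lam1} ({..< c - lam1} \<union> {c + lam1 <..}) \<phi>"
    unfolding expert_def
  proof (intro conjI dr ballI impI)
    fix \<theta>0 \<theta>1 C
    assume th0: "\<theta>0 \<in> {c - lam1 .. c + lam1}" and th1: "\<theta>1 \<in> {..< c - lam1} \<union> {c + lam1 <..}"
      and C: "C \<in> sets (sym_space c)" and Cn: "emeasure (leb_sym c) C \<noteq> 0"
    have C': "C \<in> sym_sets c" using C by simp
    have Cn': "emeasure lborel C \<noteq> 0" using Cn leb_emeasure[OF C'] by simp
    have th: "\<bar>\<theta>0 - c\<bar> \<le> \<bar>\<theta>1 - c\<bar>" using th0 th1 by auto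
    show "measure (gauss_sym c \<theta>0) (C \<inter> {x \<in> space (sym_space c). \<phi> x = 1}) / measure (gauss_sym c \<theta>0) C
        \<le> measure (gauss_sym c \<theta>1) (C \<inter> {x \<in> space (sym_space c). \<phi> x = 1}) / measure (gauss_sym c \<theta>1) C"
      using dir2[OF dr t th C' Cn'] by simp
  qed
qed

end
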